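(* Let $k,c_1$ be real constants and let $F_2,F_3,N$ be smooth functions of $\theta$ on an interval satisfying $$N''+N=3F_3',\quad kN=(3F_2-c_1)F_2',\quad 2NF_2=(3F_2-c_1)F_3'+N'F_2',\quad 3NF_3=N'F_3'$$ (primes denote $d/d\theta$). In polar coordinates $x=r\cos\theta$, $y=r\sin\theta$ ($r>0$, $\theta$ in that interval), let $$V=\frac kr+\frac{F_2(\theta)}{r^2}+\frac{F_3(\theta)}{r^3}.$$ Then $$J=p_\theta^3+N(\theta)p_r+\Big(\frac1rN'(\theta)+3F_2(\theta)-c_1\Big)p_\theta$$ is a first integral of $\ddot x=-V_{,x}$, $\ddot y=-V_{,y}$, where $p_r=\dot r$ and $p_\theta=r^2\dot\theta=x\dot y-y\dot x$.
   Context: A first integral is a function of $(t,x,y,\dot x,\dot y)$ whose total time derivative vanishes along every solution of the given equations of motion. *)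

theory Defs
  imports "HOL-Analysis.Analysis"
begin

definition smooth_on :: "real set \<Rightarrow> (real \<Rightarrow> real) \<Rightarrow> bool" where
  "smooth_on I f \<longleftrightarrow> (\<forall>n. \<forall>x\<in>I. ((deriv ^^ n) f) differentiable (at x))"

text \<open>Local polar angle of the point (xi, eta), the branch near the reference angle th0.\<close>
definition loc_angle :: "real \<Rightarrow> real \<Rightarrow> real \<Rightarrow> real" where
  "loc_angle th0 xi eta = th0 + Arg (Complex xi eta / cis th0)"

definition Vpot :: "real \<Rightarrow> (real \<Rightarrow> real) \<Rightarrow> (real \<Rightarrow> real) \<Rightarrow> real \<Rightarrow> real \<Rightarrow> real \<Rightarrow> real" where
  "Vpot k F2 F3 th0 xi eta =
     (let r = sqrt (xi^2 + eta^2); th = loc_angle th0 xi eta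
      in k / r + F2 th / r^2 + F3 th / r^3)"

end

theory Submission imports Defs begin

lemma arctan_quot_deriv:
  fixes a b :: "real \<Rightarrow> real"
  assumes "(a has_real_derivative a') (at z)" "(b has_real_derivative b') (at z)" "a z \<noteq> 0"
  shows "((\<lambda>w. arctan (b w / a w)) has_real_derivative ((b' * a z - a' * b z)/((a z)^2 + (b z)^2))) (at z)"
proof -
  have "((\<lambda>w. arctan (b w / a w)) has_real_derivative inverse (1 + (b z / a z)^2) * ((b' * a z - b z * a') / (a z * a z))) (at z)"
    by (rule DERIV_chain2[OF DERIV_arctan DERIV_divide[OF assms(2) assms(1) assms(3)]])
  moreover have "inverse (1 + (b z / a z)^2) * ((b' * a z - b z * a') / (a z * a z)) = (b' * a z - a' * b z)/((a z)^2 + (b z)^2)"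
  proof -
    have pos: "(a z)^2 + (b z)^2 > 0" using assms(3) by (simp add: add_pos_nonneg)
    have pos2: "(a z)^2 + (b z)^2 \<noteq> 0" using pos by linarith
    have "1 + (b z / a z)^2 = ((a z)^2 + (b z)^2) / (a z)^2" using assms(3) by (simp add: field_simps)
    hence e: "inverse (1 + (b z / a z)^2) = (a z)^2 / ((a z)^2 + (b z)^2)" by simp
    have "(a z)^2 / ((a z)^2 + (b z)^2) * ((b' * a z - b z * a') / (a z * a z)) = (b' * a z - a' * b z)/((a z)^2 + (b z)^2)"
      using assms(3) pos2 by (simp add: power2_eq_square divide_simps)
    thus ?thesis using e by simp
  qed
  ultimately show ?thesis by simp
qed

lemma V_deriv:
  fixes \<rho> \<theta> F2 F3 :: "real \<Rightarrow> real"
  assumes "(\<rho> has_real_derivative d\<rho>) (at z)" "(\<theta> has_real_derivative d\<theta>) (at z)" "\<rho> z > 0"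
    "(F2 has_real_derivative d2) (at (\<theta> z))" "(F3 has_real_derivative d3) (at (\<theta> z))"
  shows "((\<lambda>w. k/\<rho> w + F2(\<theta> w)/\<rho> w^2 + F3(\<theta> w)/\<rho> w^3) has_real_derivative
     (-k*d\<rho>/\<rho> z^2 + d2*d\<theta>/\<rho> z^2 - 2*F2(\<theta> z)*d\<rho>/\<rho> z^3 + d3*d\<theta>/\<rho> z^3 - 3*F3(\<theta> z)*d\<rho>/\<rho> z^4)) (at z)"
proof -
  have c2: "((\<lambda>w. F2 (\<theta> w)) has_real_derivative d2 * d\<theta>) (at z)" by (rule DERIV_chain2[OF assms(4) assms(2)])
  have c3: "((\<lambda>w. F3 (\<theta> w)) has_real_derivative d3 * d\<theta>) (at z)" by (rule DERIV_chain2[OF assms(5) assms(2)])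
  show ?thesis
    using assms(3) by (auto intro!: derivative_eq_intros c2 c3 assms simp: field_simps power2_eq_square power3_eq_cube eval_nat_numeral)
qed

lemma Vpot_eq:
  assumes "0 < \<xi> * cos th0 + \<eta> * sin th0"
  shows "Vpot k F2 F3 th0 \<xi> \<eta> = k / sqrt (\<xi>^2+\<eta>^2) + F2 (th0 + arctan ((- \<xi> * sin th0 + \<eta> * cos th0) / (\<xi> * cos th0 + \<eta> * sin th0))) / (sqrt (\<xi>^2+\<eta>^2))^2
      + F3 (th0 + arctan ((- \<xi> * sin th0 + \<eta> * cos th0) / (\<xi> * cos th0 + \<eta> * sin th0))) / (sqrt (\<xi>^2+\<eta>^2))^3"
proof -
  have cz: "cis th0 \<noteq> 0" by simp
  have h1: "\<xi> = (\<xi> * cos th0 + \<eta> * sin th0) * cos th0 - (- \<xi> * sin th0 + \<eta> * cos th0) * sin th0"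
    using sin_cos_squared_add[of th0] by algebra
  have h2: "\<eta> = (\<xi> * cos th0 + \<eta> * sin th0) * sin th0 + (- \<xi> * sin th0 + \<eta> * cos th0) * cos th0"
    using sin_cos_squared_add[of th0] by algebra
  have e1: "Complex \<xi> \<eta> = Complex ((\<xi> * cos th0 + \<eta> * sin th0) * cos th0 - (- \<xi> * sin th0 + \<eta> * cos th0) * sin th0)
      ((\<xi> * cos th0 + \<eta> * sin th0) * sin th0 + (- \<xi> * sin th0 + \<eta> * cos th0) * cos th0)"
    using h1 h2 by metis
  have "Complex \<xi> \<eta> = Complex (\<xi> * cos th0 + \<eta> * sin th0) (- \<xi> * sin th0 + \<eta> * cos th0) * cis th0"
    unfolding e1 by (simp add: complex_eq_iff)
  hence "Complex \<xi> \<eta> / cis th0 = Complex (\<xi> * cos th0 + \<eta> * sin th0) (- \<xi> * sin th0 + \<eta> * cos th0)"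
    using cz by (simp add: field_simps)
  hence "Arg (Complex \<xi> \<eta> / cis th0) = arctan ((- \<xi> * sin th0 + \<eta> * cos th0) / (\<xi> * cos th0 + \<eta> * sin th0))"
    using arg_conv_arctan[of "Complex (\<xi> * cos th0 + \<eta> * sin th0) (- \<xi> * sin th0 + \<eta> * cos th0)"] assms by simp
  thus ?thesis unfolding Vpot_def loc_angle_def Let_def by simp
qed

lemma Vpot_dxi:
  assumes R: "R > 0" and xe: "\<xi>0 = R * cos th0" and ye: "\<eta>0 = R * sin th0"
    and d2: "(F2 has_real_derivative d2) (at th0)" and d3: "(F3 has_real_derivative d3) (at th0)"
  shows "deriv (\<lambda>\<xi>. Vpot k F2 F3 th0 \<xi> \<eta>0) \<xi>0 =
    -k*cos th0/R^2 + d2*(-sin th0/R)/R^2 - 2*F2 th0*cos th0/R^3 + d3*(-sin th0/R)/R^3 - 3*F3 th0*cos th0/R^4"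
proof -
  define a where "a = (\<lambda>\<xi>. \<xi> * cos th0 + \<eta>0 * sin th0)"
  define b where "b = (\<lambda>\<xi>. - \<xi> * sin th0 + \<eta>0 * cos th0)"
  define \<rho> where "\<rho> = (\<lambda>\<xi>. sqrt (\<xi>^2+\<eta>0^2))"
  define \<theta> where "\<theta> = (\<lambda>\<xi>. th0 + arctan (b \<xi> / a \<xi>))"
  have "a \<xi>0 = R * ((cos th0)^2 + (sin th0)^2)" by (simp only: a_def xe ye) algebra
  hence a0: "a \<xi>0 = R" by simp
  have b0: "b \<xi>0 = 0" unfolding b_def xe ye by (simp add: algebra_simps)
  have "\<xi>0^2+\<eta>0^2 = R^2 * ((cos th0)^2 + (sin th0)^2)" unfolding xe ye by algebra
  hence s0: "\<xi>0^2+\<eta>0^2 = R^2" by simp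
  hence \<rho>0: "\<rho> \<xi>0 = R" unfolding \<rho>_def using R by simp
  have da: "(a has_real_derivative cos th0) (at \<xi>0)" unfolding a_def by (auto intro!: derivative_eq_intros)
  have db: "(b has_real_derivative - sin th0) (at \<xi>0)" unfolding b_def by (auto intro!: derivative_eq_intros)
  have "((\<lambda>\<xi>. \<xi>^2+\<eta>0^2) has_real_derivative 2*\<xi>0) (at \<xi>0)" by (auto intro!: derivative_eq_intros)
  from DERIV_chain2[OF DERIV_real_sqrt this] have
    "(\<rho> has_real_derivative inverse (sqrt (\<xi>0^2+\<eta>0^2)) / 2 * (2*\<xi>0)) (at \<xi>0)"
    unfolding \<rho>_def using s0 R by simp
  hence d\<rho>: "(\<rho> has_real_derivative cos th0) (at \<xi>0)" using s0 R xe by (simp add: field_simps)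
  have "((\<lambda>\<xi>. arctan (b \<xi> / a \<xi>)) has_real_derivative ((- sin th0) * a \<xi>0 - cos th0 * b \<xi>0)/((a \<xi>0)^2 + (b \<xi>0)^2)) (at \<xi>0)"
    by (rule arctan_quot_deriv[OF da db]) (use a0 R in simp)
  hence "((\<lambda>\<xi>. arctan (b \<xi> / a \<xi>)) has_real_derivative - sin th0 / R) (at \<xi>0)"
    using a0 b0 R by (simp add: power2_eq_square)
  from DERIV_add[OF DERIV_const this] have d\<theta>: "(\<theta> has_real_derivative - sin th0 / R) (at \<xi>0)"
    unfolding \<theta>_def by simp
  have \<theta>0: "\<theta> \<xi>0 = th0" unfolding \<theta>_def using b0 by simp
  have V: "((\<lambda>w. k/\<rho> w + F2(\<theta> w)/\<rho> w^2 + F3(\<theta> w)/\<rho> w^3) has_real_derivative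
    -k*cos th0/R^2 + d2*(-sin th0/R)/R^2 - 2*F2 th0*cos th0/R^3 + d3*(-sin th0/R)/R^3 - 3*F3 th0*cos th0/R^4) (at \<xi>0)"
    using V_deriv[OF d\<rho> d\<theta>, of F2 d2 F3 d3 k] \<rho>0 \<theta>0 R d2 d3 by simp
  have op: "open {\<xi>. 0 < a \<xi>}" unfolding a_def
    by (rule open_Collect_less) (auto intro!: continuous_intros)
  have "((\<lambda>\<xi>. Vpot k F2 F3 th0 \<xi> \<eta>0) has_real_derivative
    -k*cos th0/R^2 + d2*(-sin th0/R)/R^2 - 2*F2 th0*cos th0/R^3 + d3*(-sin th0/R)/R^3 - 3*F3 th0*cos th0/R^4) (at \<xi>0)"
  proof (rule has_field_derivative_transform_within_open[OF V op])
    show "\<xi>0 \<in> {\<xi>. 0 < a \<xi>}" using a0 R by simp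
    fix \<xi> assume "\<xi> \<in> {\<xi>. 0 < a \<xi>}"
    thus "k/\<rho> \<xi> + F2(\<theta> \<xi>)/\<rho> \<xi>^2 + F3(\<theta> \<xi>)/\<rho> \<xi>^3 = Vpot k F2 F3 th0 \<xi> \<eta>0"
      using Vpot_eq[of \<xi> th0 \<eta>0 k F2 F3] unfolding a_def b_def \<rho>_def \<theta>_def by simp
  qed
  thus ?thesis by (rule DERIV_imp_deriv)
qed

lemma Vpot_deta:
  assumes R: "R > 0" and xe: "\<xi>0 = R * cos th0" and ye: "\<eta>0 = R * sin th0"
    and d2: "(F2 has_real_derivative d2) (at th0)" and d3: "(F3 has_real_derivative d3) (at th0)"
  shows "deriv (\<lambda>\<eta>. Vpot k F2 F3 th0 \<xi>0 \<eta>) \<eta>0 =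
    -k* sin th0/R^2 + d2*(cos th0/R)/R^2 - 2*F2 th0* sin th0/R^3 + d3*(cos th0/R)/R^3 - 3*F3 th0* sin th0/R^4"
proof -
  define a where "a = (\<lambda>\<eta>. \<xi>0 * cos th0 + \<eta> * sin th0)"
  define b where "b = (\<lambda>\<eta>. - \<xi>0 * sin th0 + \<eta> * cos th0)"
  define \<rho> where "\<rho> = (\<lambda>\<eta>. sqrt (\<xi>0^2+\<eta>^2))"
  define \<theta> where "\<theta> = (\<lambda>\<eta>. th0 + arctan (b \<eta> / a \<eta>))"
  have "a \<eta>0 = R * ((cos th0)^2 + (sin th0)^2)" by (simp only: a_def xe ye) algebra
  hence a0: "a \<eta>0 = R" by simp
  have b0: "b \<eta>0 = 0" unfolding b_def xe ye by (simp add: algebra_simps)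
  have "\<xi>0^2+\<eta>0^2 = R^2 * ((cos th0)^2 + (sin th0)^2)" unfolding xe ye by algebra
  hence s0: "\<xi>0^2+\<eta>0^2 = R^2" by simp
  hence \<rho>0: "\<rho> \<eta>0 = R" unfolding \<rho>_def using R by simp
  have da: "(a has_real_derivative sin th0) (at \<eta>0)" unfolding a_def by (auto intro!: derivative_eq_intros)
  have db: "(b has_real_derivative cos th0) (at \<eta>0)" unfolding b_def by (auto intro!: derivative_eq_intros)
  have "((\<lambda>\<eta>. \<xi>0^2+\<eta>^2) has_real_derivative 2*\<eta>0) (at \<eta>0)" by (auto intro!: derivative_eq_intros)
  from DERIV_chain2[OF DERIV_real_sqrt this] have
    "(\<rho> has_real_derivative inverse (sqrt (\<xi>0^2+\<eta>0^2)) / 2 * (2*\<eta>0)) (at \<eta>0)"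
    unfolding \<rho>_def using s0 R by simp
  hence d\<rho>: "(\<rho> has_real_derivative sin th0) (at \<eta>0)" using s0 R ye by (simp add: field_simps)
  have "((\<lambda>\<eta>. arctan (b \<eta> / a \<eta>)) has_real_derivative ((cos th0) * a \<eta>0 - sin th0 * b \<eta>0)/((a \<eta>0)^2 + (b \<eta>0)^2)) (at \<eta>0)"
    by (rule arctan_quot_deriv[OF da db]) (use a0 R in simp)
  hence "((\<lambda>\<eta>. arctan (b \<eta> / a \<eta>)) has_real_derivative cos th0 / R) (at \<eta>0)"
    using a0 b0 R by (simp add: power2_eq_square)
  from DERIV_add[OF DERIV_const this] have d\<theta>: "(\<theta> has_real_derivative cos th0 / R) (at \<eta>0)"
    unfolding \<theta>_def by simp
  have \<theta>0: "\<theta> \<eta>0 = th0" unfolding \<theta>_def using b0 by simp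
  have V: "((\<lambda>w. k/\<rho> w + F2(\<theta> w)/\<rho> w^2 + F3(\<theta> w)/\<rho> w^3) has_real_derivative
    -k* sin th0/R^2 + d2*(cos th0/R)/R^2 - 2*F2 th0* sin th0/R^3 + d3*(cos th0/R)/R^3 - 3*F3 th0* sin th0/R^4) (at \<eta>0)"
    using V_deriv[OF d\<rho> d\<theta>, of F2 d2 F3 d3 k] \<rho>0 \<theta>0 R d2 d3 by simp
  have op: "open {\<eta>. 0 < a \<eta>}" unfolding a_def
    by (rule open_Collect_less) (auto intro!: continuous_intros)
  have "((\<lambda>\<eta>. Vpot k F2 F3 th0 \<xi>0 \<eta>) has_real_derivative
    -k* sin th0/R^2 + d2*(cos th0/R)/R^2 - 2*F2 th0* sin th0/R^3 + d3*(cos th0/R)/R^3 - 3*F3 th0* sin th0/R^4) (at \<eta>0)"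
  proof (rule has_field_derivative_transform_within_open[OF V op])
    show "\<eta>0 \<in> {\<eta>. 0 < a \<eta>}" using a0 R by simp
    fix \<eta> assume "\<eta> \<in> {\<eta>. 0 < a \<eta>}"
    thus "k/\<rho> \<eta> + F2(\<theta> \<eta>)/\<rho> \<eta>^2 + F3(\<theta> \<eta>)/\<rho> \<eta>^3 = Vpot k F2 F3 th0 \<xi>0 \<eta>"
      using Vpot_eq[of \<xi>0 th0 \<eta> k F2 F3] unfolding a_def b_def \<rho>_def \<theta>_def by simp
  qed
  thus ?thesis by (rule DERIV_imp_deriv)
qed

lemma th_deriv:
  fixes x y th :: "real \<Rightarrow> real"
  assumes T: "open T" "continuous_on T th" "t0 \<in> T"
   and dx: "(x has_real_derivative x1) (at t0)" and dy: "(y has_real_derivative y1) (at t0)"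
   and pos: "\<forall>t\<in>T. sqrt ((x t)^2+(y t)^2) > 0"
   and px: "\<forall>t\<in>T. x t = sqrt ((x t)^2+(y t)^2) * cos (th t)"
   and py: "\<forall>t\<in>T. y t = sqrt ((x t)^2+(y t)^2) * sin (th t)"
  shows "(th has_real_derivative (x t0 * y1 - y t0 * x1)/((x t0)^2+(y t0)^2)) (at t0)"
proof -
  define th0 where "th0 = th t0"
  define a where "a = (\<lambda>t. x t * cos th0 + y t * sin th0)"
  define b where "b = (\<lambda>t. - x t * sin th0 + y t * cos th0)"
  define R where "R = (\<lambda>t. sqrt ((x t)^2+(y t)^2))"
  have xR: "x t = R t * cos (th t)" if "t \<in> T" for t using px that unfolding R_def by blast
  have yR: "y t = R t * sin (th t)" if "t \<in> T" for t using py that unfolding R_def by blast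
  have Rp: "R t > 0" if "t \<in> T" for t using pos that unfolding R_def by blast
  have ab: "a t = R t * cos (th t - th0) \<and> b t = R t * sin (th t - th0)" if "t \<in> T" for t
    unfolding a_def b_def xR[OF that] yR[OF that] by (simp add: cos_diff sin_diff algebra_simps)
  define S where "S = T \<inter> th -` {th0 - pi/2 <..< th0 + pi/2}"
  have Sop: "open S" unfolding S_def by (rule continuous_open_preimage[OF T(2) T(1)]) simp
  have t0S: "t0 \<in> S" unfolding S_def th0_def using T(3) by simp
  have eqS: "th0 + arctan (b t / a t) = th t" if "t \<in> S" for t
  proof -
    have tT: "t \<in> T" and d1: "-(pi/2) < th t - th0" and d2: "th t - th0 < pi/2"
      using that unfolding S_def by auto
    have "cos (th t - th0) > 0" by (rule cos_gt_zero_pi[OF d1 d2])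
    hence "b t / a t = tan (th t - th0)" using ab[OF tT] Rp[OF tT] by (simp add: tan_def)
    thus ?thesis using arctan_tan[OF d1 d2] by simp
  qed
  have a0: "a t0 = R t0" and b0: "b t0 = 0" using ab[OF T(3)] unfolding th0_def by auto
  have da: "(a has_real_derivative x1 * cos th0 + y1 * sin th0) (at t0)" unfolding a_def
    by (auto intro!: derivative_eq_intros dx dy)
  have db: "(b has_real_derivative - x1 * sin th0 + y1 * cos th0) (at t0)" unfolding b_def
    by (auto intro!: derivative_eq_intros dx dy)
  have "((\<lambda>t. arctan (b t / a t)) has_real_derivative
      ((- x1 * sin th0 + y1 * cos th0) * a t0 - (x1 * cos th0 + y1 * sin th0) * b t0)/((a t0)^2 + (b t0)^2)) (at t0)"
    by (rule arctan_quot_deriv[OF da db]) (use a0 Rp[OF T(3)] in simp)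
  hence "((\<lambda>t. arctan (b t / a t)) has_real_derivative (- x1 * sin th0 + y1 * cos th0) / R t0) (at t0)"
    using a0 b0 Rp[OF T(3)] by (simp add: power2_eq_square)
  from DERIV_add[OF DERIV_const this]
  have D: "((\<lambda>t. th0 + arctan (b t / a t)) has_real_derivative (- x1 * sin th0 + y1 * cos th0) / R t0) (at t0)"
    by simp
  have "(th has_real_derivative (- x1 * sin th0 + y1 * cos th0) / R t0) (at t0)"
    by (rule has_field_derivative_transform_within_open[OF D Sop t0S eqS])
  moreover have "(x t0 * y1 - y t0 * x1)/((x t0)^2+(y t0)^2) = (- x1 * sin th0 + y1 * cos th0) / R t0"
  proof -
    have R0: "R t0 > 0" using Rp[OF T(3)] .
    have "(x t0)^2+(y t0)^2 = (R t0)^2" unfolding R_def by simp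
    moreover have "x t0 * y1 - y t0 * x1 = R t0 * (- x1 * sin th0 + y1 * cos th0)"
      using xR[OF T(3)] yR[OF T(3)] unfolding th0_def by (simp add: algebra_simps)
    ultimately show ?thesis using R0 by (simp add: power2_eq_square)
  qed
  ultimately show ?thesis by simp
qed

lemma final_alg:
  fixes R P Q n n1 n2 f2 f3 d2 d3 k c1 dP dQ v2 :: real
  assumes R: "R > 0" and hP: "dP = -(d2/R^2 + d3/R^3)"
    and hQ: "dQ = v2 - R*(-k/R^2 - 2*f2/R^3 - 3*f3/R^4)" and hv: "v2 = (P^2+Q^2)/R^2"
  shows "3*P^2*dP + (n1*(P/R^2)*(Q/R) + n*((dQ*R - Q*(Q/R))/(R*R))) + ((n2*(P/R^2)*R - n1*(Q/R))/(R*R) + 3*(d2*(P/R^2)))*P + (n1/R + 3*f2 - c1)*dP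
   = P^2/R^3*(n2 + n - 3*d3) + (k*n - (3*f2-c1)*d2)/R^2 + (2*n*f2 - (3*f2-c1)*d3 - n1*d2)/R^3 + (3*n*f3 - n1*d3)/R^4"
  unfolding hP hQ hv using R by (simp add: field_simps) (simp add: algebra_simps power2_eq_square power3_eq_cube eval_nat_numeral)


lemma polar_alg:
  fixes R c s k f2 f3 d2 d3 :: real
  assumes R: "R > 0" and cs: "c^2 + s^2 = 1"
  shows "(R*c)*(-(-k* s/R^2 + d2*(c/R)/R^2 - 2*f2* s/R^3 + d3*(c/R)/R^3 - 3*f3* s/R^4))
       - (R* s)*(-(-k*c/R^2 + d2*(-s/R)/R^2 - 2*f2*c/R^3 + d3*(-s/R)/R^3 - 3*f3*c/R^4)) = -(d2/R^2+d3/R^3)"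
    and "(R*c)*(-(-k*c/R^2 + d2*(-s/R)/R^2 - 2*f2*c/R^3 + d3*(-s/R)/R^3 - 3*f3*c/R^4))
       + (R* s)*(-(-k* s/R^2 + d2*(c/R)/R^2 - 2*f2* s/R^3 + d3*(c/R)/R^3 - 3*f3* s/R^4)) = - R*(-k/R^2 - 2*f2/R^3 - 3*f3/R^4)"
proof -
  have "(R*c)*(-(-k* s/R^2 + d2*(c/R)/R^2 - 2*f2* s/R^3 + d3*(c/R)/R^3 - 3*f3* s/R^4))
       - (R* s)*(-(-k*c/R^2 + d2*(-s/R)/R^2 - 2*f2*c/R^3 + d3*(-s/R)/R^3 - 3*f3*c/R^4)) = -(d2/R^2+d3/R^3) * (c^2+s^2)"
    using R by (simp add: field_simps) (simp add: algebra_simps power2_eq_square eval_nat_numeral)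
  thus "(R*c)*(-(-k* s/R^2 + d2*(c/R)/R^2 - 2*f2* s/R^3 + d3*(c/R)/R^3 - 3*f3* s/R^4))
       - (R* s)*(-(-k*c/R^2 + d2*(-s/R)/R^2 - 2*f2*c/R^3 + d3*(-s/R)/R^3 - 3*f3*c/R^4)) = -(d2/R^2+d3/R^3)"
    using cs by simp
  have "(R*c)*(-(-k*c/R^2 + d2*(-s/R)/R^2 - 2*f2*c/R^3 + d3*(-s/R)/R^3 - 3*f3*c/R^4))
       + (R* s)*(-(-k* s/R^2 + d2*(c/R)/R^2 - 2*f2* s/R^3 + d3*(c/R)/R^3 - 3*f3* s/R^4)) = - R*(-k/R^2 - 2*f2/R^3 - 3*f3/R^4) * (c^2+s^2)"
    using R by (simp add: field_simps) (simp add: algebra_simps power2_eq_square eval_nat_numeral)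
  thus "(R*c)*(-(-k*c/R^2 + d2*(-s/R)/R^2 - 2*f2*c/R^3 + d3*(-s/R)/R^3 - 3*f3*c/R^4))
       + (R* s)*(-(-k* s/R^2 + d2*(c/R)/R^2 - 2*f2* s/R^3 + d3*(c/R)/R^3 - 3*f3* s/R^4)) = - R*(-k/R^2 - 2*f2/R^3 - 3*f3/R^4)"
    using cs by simp
qed

lemma G_deriv:
  fixes P Q Rr A B C :: "real \<Rightarrow> real"
  assumes "(P has_real_derivative dP) (at t)" "(Q has_real_derivative dQ) (at t)" "(Rr has_real_derivative dR) (at t)"
    "(A has_real_derivative dA) (at t)" "(B has_real_derivative dB) (at t)" "(C has_real_derivative dC) (at t)"
    "Rr t \<noteq> 0"
  shows "((\<lambda>s. P s^3 + A s * (Q s / Rr s) + (B s / Rr s + 3*C s - c1) * P s) has_real_derivative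
   3*P t^2*dP + (dA*(Q t/Rr t) + A t*((dQ*Rr t - Q t*dR)/(Rr t*Rr t))) + ((dB*Rr t - B t*dR)/(Rr t*Rr t) + 3*dC)*P t + (B t/Rr t + 3*C t - c1)*dP) (at t)"
  using assms by (auto intro!: derivative_eq_intros simp: field_simps power2_eq_square)

theorem mainTheorem9:
  fixes k c1 :: real
    and F2 F3 N :: "real \<Rightarrow> real"
    and I T :: "real set"
    and x y th :: "real \<Rightarrow> real"
  assumes I_open: "open I" and I_int: "is_interval I" and I_ne: "I \<noteq> {}"
    and smF2: "smooth_on I F2" and smF3: "smooth_on I F3" and smN: "smooth_on I N"
    and eq1: "\<forall>\<theta>\<in>I. deriv (deriv N) \<theta> + N \<theta> = 3 * deriv F3 \<theta>"
    and eq2: "\<forall>\<theta>\<in>I. k * N \<theta> = (3 * F2 \<theta> - c1) * deriv F2 \<theta>"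
    and eq3: "\<forall>\<theta>\<in>I. 2 * N \<theta> * F2 \<theta> = (3 * F2 \<theta> - c1) * deriv F3 \<theta> + deriv N \<theta> * deriv F2 \<theta>"
    and eq4: "\<forall>\<theta>\<in>I. 3 * N \<theta> * F3 \<theta> = deriv N \<theta> * deriv F3 \<theta>"
    \<comment> \<open>a solution (x(t), y(t)) on the open time interval T, staying in the region r > 0,
        theta in I, with a continuous choice of polar angle th(t)\<close>
    and T_open: "open T" and T_int: "is_interval T"
    and x_diff: "\<forall>t\<in>T. x differentiable (at t) \<and> deriv x differentiable (at t)"
    and y_diff: "\<forall>t\<in>T. y differentiable (at t) \<and> deriv y differentiable (at t)"
    and th_cont: "continuous_on T th"
    and th_in: "\<forall>t\<in>T. th t \<in> I"
    and r_pos: "\<forall>t\<in>T. sqrt ((x t)^2 + (y t)^2) > 0"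
    and polar_x: "\<forall>t\<in>T. x t = sqrt ((x t)^2 + (y t)^2) * cos (th t)"
    and polar_y: "\<forall>t\<in>T. y t = sqrt ((x t)^2 + (y t)^2) * sin (th t)"
    and eom_x: "\<forall>t\<in>T. deriv (deriv x) t = - deriv (\<lambda>\<xi>. Vpot k F2 F3 (th t) \<xi> (y t)) (x t)"
    and eom_y: "\<forall>t\<in>T. deriv (deriv y) t = - deriv (\<lambda>\<eta>. Vpot k F2 F3 (th t) (x t) \<eta>) (y t)"
  shows "\<forall>t\<in>T.
    ((\<lambda>s. let r = (\<lambda>u. sqrt ((x u)^2 + (y u)^2));
               p_r = deriv r s;
               p_th = x s * deriv y s - y s * deriv x s
           in p_th ^ 3 + N (th s) * p_r
              + (deriv N (th s) / r s + 3 * F2 (th s) - c1) * p_th)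
      has_real_derivative 0) (at t)"

proof (intro ballI)
  fix t assume t: "t \<in> T"
  have hx: "(x has_real_derivative deriv x s) (at s)" if "s \<in> T" for s
    using x_diff that DERIV_deriv_iff_real_differentiable by blast
  have hy: "(y has_real_derivative deriv y s) (at s)" if "s \<in> T" for s
    using y_diff that DERIV_deriv_iff_real_differentiable by blast
  have hx2: "(deriv x has_real_derivative deriv (deriv x) t) (at t)"
    using x_diff t DERIV_deriv_iff_real_differentiable by blast
  have hy2: "(deriv y has_real_derivative deriv (deriv y) t) (at t)"
    using y_diff t DERIV_deriv_iff_real_differentiable by blast
  have sm: "((deriv^^n) f has_real_derivative deriv ((deriv^^n) f) \<theta>) (at \<theta>)"
    if "smooth_on I f" "\<theta> \<in> I" for f n \<theta>
    using that unfolding smooth_on_def using DERIV_deriv_iff_real_differentiable by blast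
  define th0 where "th0 = th t"
  have th0I: "th0 \<in> I" using th_in t unfolding th0_def by blast
  have dN: "(N has_real_derivative deriv N th0) (at th0)" using sm[OF smN th0I, of 0] by simp
  have dN1: "(deriv N has_real_derivative deriv (deriv N) th0) (at th0)" using sm[OF smN th0I, of 1] by simp
  have dF2: "(F2 has_real_derivative deriv F2 th0) (at th0)" using sm[OF smF2 th0I, of 0] by simp
  have dF3: "(F3 has_real_derivative deriv F3 th0) (at th0)" using sm[OF smF3 th0I, of 0] by simp
  have derivR: "((\<lambda>u. sqrt ((x u)^2+(y u)^2)) has_real_derivative
       (x s * deriv x s + y s * deriv y s) / sqrt ((x s)^2+(y s)^2)) (at s)" if s: "s \<in> T" for s
  proof -
    have q: "0 < (x s)^2+(y s)^2" using r_pos s by auto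
    have "((\<lambda>u. (x u)^2+(y u)^2) has_real_derivative 2*x s*deriv x s + 2*y s*deriv y s) (at s)"
      by (auto intro!: derivative_eq_intros hx[OF s] hy[OF s])
    from DERIV_chain2[OF DERIV_real_sqrt[OF q] this]
    have "((\<lambda>u. sqrt ((x u)^2+(y u)^2)) has_real_derivative
       inverse (sqrt ((x s)^2+(y s)^2)) / 2 * (2*x s*deriv x s + 2*y s*deriv y s)) (at s)" .
    moreover have "inverse (sqrt ((x s)^2+(y s)^2)) / 2 * (2*x s*deriv x s + 2*y s*deriv y s)
       = (x s * deriv x s + y s * deriv y s) / sqrt ((x s)^2+(y s)^2)"
    proof -
      have q2: "sqrt ((x s)^2+(y s)^2) \<noteq> 0" using q by (metis less_irrefl real_sqrt_eq_zero_cancel_iff)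
      show ?thesis using q2 by (simp add: field_simps)
    qed
    ultimately show ?thesis by (simp only:)
  qed
  define X where "X = x t"
  define Y where "Y = y t"
  define X1 where "X1 = deriv x t"
  define Y1 where "Y1 = deriv y t"
  define X2 where "X2 = deriv (deriv x) t"
  define Y2 where "Y2 = deriv (deriv y) t"
  define R where "R = sqrt (X^2+Y^2)"
  define Pt where "Pt = X*Y1 - Y*X1"
  define Qt where "Qt = X*X1 + Y*Y1"
  have Rp: "R > 0" using r_pos t unfolding R_def X_def Y_def by blast
  have R2: "X^2+Y^2 = R^2" unfolding R_def by simp
  have XR: "X = R * cos th0" using polar_x t unfolding R_def X_def Y_def th0_def by blast
  have YR: "Y = R * sin th0" using polar_y t unfolding R_def X_def Y_def th0_def by blast
  have thd: "(th has_real_derivative Pt / R^2) (at t)"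
    using th_deriv[OF T_open th_cont t hx[OF t] hy[OF t] r_pos polar_x polar_y]
    unfolding Pt_def X_def Y_def X1_def Y1_def R2[unfolded X_def Y_def] by simp
  have X2e: "X2 = - (-k*cos th0/R^2 + deriv F2 th0*(-sin th0/R)/R^2 - 2*F2 th0*cos th0/R^3 + deriv F3 th0*(-sin th0/R)/R^3 - 3*F3 th0*cos th0/R^4)"
    using eom_x t Vpot_dxi[OF Rp XR YR dF2 dF3, of k] unfolding X2_def X_def Y_def th0_def by simp
  have Y2e: "Y2 = - (-k* sin th0/R^2 + deriv F2 th0*(cos th0/R)/R^2 - 2*F2 th0* sin th0/R^3 + deriv F3 th0*(cos th0/R)/R^3 - 3*F3 th0* sin th0/R^4)"
    using eom_y t Vpot_deta[OF Rp XR YR dF2 dF3, of k] unfolding Y2_def X_def Y_def th0_def by simp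
  have cs: "(cos th0)^2 + (sin th0)^2 = 1" by simp
  have hP: "X*Y2 - Y*X2 = -(deriv F2 th0/R^2 + deriv F3 th0/R^3)"
    unfolding X2e Y2e XR YR by (rule polar_alg(1)[OF Rp cs])
  have hXX: "X*X2 + Y*Y2 = - R*(-k/R^2 - 2*F2 th0/R^3 - 3*F3 th0/R^4)"
    unfolding X2e Y2e XR YR by (rule polar_alg(2)[OF Rp cs])
  have hQ: "X1*X1 + X*X2 + Y1*Y1 + Y*Y2 = (X1^2+Y1^2) - R*(-k/R^2 - 2*F2 th0/R^3 - 3*F3 th0/R^4)"
    using hXX by (simp add: power2_eq_square algebra_simps)
  have "Pt^2 + Qt^2 = (X^2+Y^2)*(X1^2+Y1^2)" unfolding Pt_def Qt_def by algebra
  hence hv: "X1^2+Y1^2 = (Pt^2+Qt^2)/R^2" using R2 Rp by (simp add: field_simps)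
  have Rne: "sqrt ((x t)^2+(y t)^2) \<noteq> 0" using Rp unfolding R_def X_def Y_def by linarith
  have dP: "((\<lambda>s. x s * deriv y s - y s * deriv x s) has_real_derivative X*Y2 - Y*X2) (at t)"
    unfolding X_def Y_def X2_def Y2_def
    by (auto intro!: derivative_eq_intros hx[OF t] hy[OF t] hx2 hy2 simp: algebra_simps)
  have dQ: "((\<lambda>s. x s * deriv x s + y s * deriv y s) has_real_derivative X1*X1 + X*X2 + Y1*Y1 + Y*Y2) (at t)"
    unfolding X_def Y_def X1_def Y1_def X2_def Y2_def
    by (auto intro!: derivative_eq_intros hx[OF t] hy[OF t] hx2 hy2 simp: algebra_simps)
  have dR: "((\<lambda>u. sqrt ((x u)^2+(y u)^2)) has_real_derivative Qt / R) (at t)"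
    using derivR[OF t] unfolding Qt_def R_def X_def Y_def X1_def Y1_def .
  have dA: "((\<lambda>s. N (th s)) has_real_derivative deriv N th0 * (Pt / R^2)) (at t)"
    using DERIV_chain2[OF dN[unfolded th0_def] thd] unfolding th0_def .
  have dB: "((\<lambda>s. deriv N (th s)) has_real_derivative deriv (deriv N) th0 * (Pt / R^2)) (at t)"
    using DERIV_chain2[OF dN1[unfolded th0_def] thd] unfolding th0_def .
  have dC: "((\<lambda>s. F2 (th s)) has_real_derivative deriv F2 th0 * (Pt / R^2)) (at t)"
    using DERIV_chain2[OF dF2[unfolded th0_def] thd] unfolding th0_def .
  have DG: "((\<lambda>s. (x s * deriv y s - y s * deriv x s)^3 + N (th s) * ((x s * deriv x s + y s * deriv y s) / sqrt ((x s)^2+(y s)^2))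
      + (deriv N (th s) / sqrt ((x s)^2+(y s)^2) + 3*F2 (th s) - c1) * (x s * deriv y s - y s * deriv x s)) has_real_derivative
     3*Pt^2*(X*Y2 - Y*X2) + (deriv N th0 * (Pt / R^2)*(Qt/R) + N th0*(((X1*X1 + X*X2 + Y1*Y1 + Y*Y2)*R - Qt*(Qt/R))/(R*R)))
     + ((deriv (deriv N) th0 * (Pt / R^2)*R - deriv N th0*(Qt/R))/(R*R) + 3*(deriv F2 th0 * (Pt / R^2)))*Pt
     + (deriv N th0/R + 3*F2 th0 - c1)*(X*Y2 - Y*X2)) (at t)"
    using G_deriv[OF dP dQ dR dA dB dC Rne, of c1]
    unfolding Pt_def Qt_def R_def X_def Y_def X1_def Y1_def th0_def by (simp only:)
  have "3*Pt^2*(X*Y2 - Y*X2) + (deriv N th0 * (Pt / R^2)*(Qt/R) + N th0*(((X1*X1 + X*X2 + Y1*Y1 + Y*Y2)*R - Qt*(Qt/R))/(R*R)))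
     + ((deriv (deriv N) th0 * (Pt / R^2)*R - deriv N th0*(Qt/R))/(R*R) + 3*(deriv F2 th0 * (Pt / R^2)))*Pt
     + (deriv N th0/R + 3*F2 th0 - c1)*(X*Y2 - Y*X2)
   = Pt^2/R^3*(deriv (deriv N) th0 + N th0 - 3*deriv F3 th0) + (k*N th0 - (3*F2 th0-c1)*deriv F2 th0)/R^2
     + (2*N th0*F2 th0 - (3*F2 th0-c1)*deriv F3 th0 - deriv N th0*deriv F2 th0)/R^3 + (3*N th0*F3 th0 - deriv N th0*deriv F3 th0)/R^4"
    by (rule final_alg[OF Rp hP hQ hv])
  also have "\<dots> = 0" using eq1 eq2 eq3 eq4 th0I by simp
  finally have DG0: "((\<lambda>s. (x s * deriv y s - y s * deriv x s)^3 + N (th s) * ((x s * deriv x s + y s * deriv y s) / sqrt ((x s)^2+(y s)^2))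
      + (deriv N (th s) / sqrt ((x s)^2+(y s)^2) + 3*F2 (th s) - c1) * (x s * deriv y s - y s * deriv x s)) has_real_derivative 0) (at t)"
    using DG by simp
  show "((\<lambda>s. let r = (\<lambda>u. sqrt ((x u)^2 + (y u)^2));
               p_r = deriv r s;
               p_th = x s * deriv y s - y s * deriv x s
           in p_th ^ 3 + N (th s) * p_r
              + (deriv N (th s) / r s + 3 * F2 (th s) - c1) * p_th)
      has_real_derivative 0) (at t)"
  proof (rule has_field_derivative_transform_within_open[OF DG0 T_open t])
    fix s assume s: "s \<in> T"
    show "(x s * deriv y s - y s * deriv x s)^3 + N (th s) * ((x s * deriv x s + y s * deriv y s) / sqrt ((x s)^2+(y s)^2))
      + (deriv N (th s) / sqrt ((x s)^2+(y s)^2) + 3*F2 (th s) - c1) * (x s * deriv y s - y s * deriv x s) =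
      (let r = (\<lambda>u. sqrt ((x u)^2 + (y u)^2));
               p_r = deriv r s;
               p_th = x s * deriv y s - y s * deriv x s
           in p_th ^ 3 + N (th s) * p_r
              + (deriv N (th s) / r s + 3 * F2 (th s) - c1) * p_th)"
      by (simp add: Let_def DERIV_imp_deriv[OF derivR[OF s]])
  qed
qed

end
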